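(* Let $c>1$ be even and let $K$ be the set partition of $S_c$ whose only part with more than one element is the set of cyclic shifts of the identity, $\{12\cdots c,\ 23\cdots c1,\ \ldots,\ c12\cdots(c-1)\}$. Then the $K$-equivalence on $S_{c+1}$ has only one nontrivial class.
   Context: Permutations are written in one-line notation as words. The order permutation (standardization) of a word $u$ of distinct positive integers of length $\ell$ is the unique $\pi\in S_\ell$ with $\pi_i<\pi_j$ iff $u_i<u_j$. The $K$-equivalence on $S_n$ is the equivalence relation generated by declaring $\phi\equiv\psi$ whenever $\phi=aub$ and $\psi=avb$ for words $a,b,u,v$ with $u,v$ of length $c$ whose order permutations lie in the same part of $K$. A class is nontrivial if it contains more than one element. *)

theory Defs
  imports Main
begin

definition perms :: "nat \<Rightarrow> nat list set" where
  "perms n = {xs. distinct xs \<and> set xs = {1..n}}"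

definition std :: "nat list \<Rightarrow> nat list" where
  "std u = (THE p. p \<in> perms (length u) \<and>
     (\<forall>i<length u. \<forall>j<length u. (p ! i < p ! j \<longleftrightarrow> u ! i < u ! j)))"

definition Kstep :: "nat \<Rightarrow> nat list set set \<Rightarrow> nat \<Rightarrow> (nat list \<times> nat list) set" where
  "Kstep c K n = {(a @ u @ b, a @ v @ b) | a u v b.
      a @ u @ b \<in> perms n \<and> a @ v @ b \<in> perms n \<and>
      length u = c \<and> length v = c \<and> (\<exists>P\<in>K. std u \<in> P \<and> std v \<in> P)}"

definition Kequiv :: "nat \<Rightarrow> nat list set set \<Rightarrow> nat \<Rightarrow> (nat list \<times> nat list) set" where
  "Kequiv c K n = ((Kstep c K n) \<union> (Kstep c K n)\<inverse>)\<^sup>* \<inter> (perms n \<times> perms n)"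

definition cyc_shifts :: "nat \<Rightarrow> nat list set" where
  "cyc_shifts c = {rotate k [1..<c+1] | k. k < c}"

definition Kcyc :: "nat \<Rightarrow> nat list set set" where
  "Kcyc c = insert (cyc_shifts c) {{p} | p. p \<in> perms c \<and> p \<notin> cyc_shifts c}"

end

theory Submission
  imports Defs
begin


definition rk :: "nat set \<Rightarrow> nat \<Rightarrow> nat" where "rk S x = card {y\<in>S. y<x} + 1"

lemma rk_less: assumes "finite S" "x\<in>S" "x'\<in>S" "x<x'" shows "rk S x < rk S x'"
proof -
  have "{y\<in>S. y<x} \<subset> {y\<in>S. y<x'}" using assms by auto
  then have "card {y\<in>S. y<x} < card {y\<in>S. y<x'}" using assms(1) by (intro psubset_card_mono) auto
  then show ?thesis unfolding rk_def by simp
qed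

lemma rk_iff: assumes "finite S" "x\<in>S" "x'\<in>S" shows "rk S x < rk S x' \<longleftrightarrow> x < x'"
  using rk_less[OF assms] rk_less[OF assms(1,3,2)] by (metis less_asym linorder_neqE_nat)

lemma rk_inj: "finite S \<Longrightarrow> inj_on (rk S) S"
  by (rule inj_onI) (metis linorder_neqE_nat rk_less less_irrefl)

lemma rk_bound: assumes "finite S" "x\<in>S" shows "rk S x \<le> card S"
proof -
  have "{y\<in>S. y<x} \<subset> S" using assms by auto
  then have "card {y\<in>S. y<x} < card S" using assms(1) by (intro psubset_card_mono) auto
  then show ?thesis unfolding rk_def by simp
qed

lemma rk_image: assumes "finite S" shows "rk S ` S = {1..card S}"
proof (rule card_subset_eq)
  show "rk S ` S \<subseteq> {1..card S}" using rk_bound[OF assms] by (auto simp: rk_def)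
  show "card (rk S ` S) = card {1..card S}" using card_image[OF rk_inj[OF assms]] by simp
qed simp

lemma rk_nth: assumes "distinct xs" "i<length xs"
  shows "rk (set xs) (xs!i) = card {j. j<length xs \<and> xs!j < xs!i} + 1"
proof -
  have "{y\<in>set xs. y < xs!i} = (nth xs) ` {j. j<length xs \<and> xs!j < xs!i}"
    by (auto simp: set_conv_nth)
  moreover have "inj_on (nth xs) {j. j<length xs \<and> xs!j < xs!i}"
    using assms by (intro inj_on_nth) auto
  ultimately show ?thesis unfolding rk_def by (simp add: card_image)
qed

lemma rk_perm: assumes "set p = {1..L}" "x \<in> set p" shows "rk (set p) x = x"
proof -
  have "{y\<in>set p. y<x} = {1..<x}" using assms by auto
  then show ?thesis using assms unfolding rk_def by auto
qed

lemma std_eq: assumes "distinct u" shows "std u = map (rk (set u)) u"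
  unfolding std_def
proof (rule the_equality)
  have fin: "finite (set u)" by simp
  show "map (rk (set u)) u \<in> perms (length u) \<and>
    (\<forall>i<length u. \<forall>j<length u. (map (rk (set u)) u ! i < map (rk (set u)) u ! j) = (u ! i < u ! j))"
    using assms rk_inj[OF fin] rk_image[OF fin] rk_iff[OF fin]
    by (auto simp: perms_def distinct_map distinct_card)
next
  fix p assume p: "p \<in> perms (length u) \<and>
    (\<forall>i<length u. \<forall>j<length u. (p ! i < p ! j) = (u ! i < u ! j))"
  then have sp: "set p = {1..length u}" and dp: "distinct p" by (auto simp: perms_def)
  have lp: "length p = length u" using distinct_card[OF dp] sp by simp
  show "p = map (rk (set u)) u"
  proof (rule nth_equalityI)
    show "length p = length (map (rk (set u)) u)" using lp by simp
    fix i assume "i < length p"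
    then have i: "i < length u" using lp by simp
    have "p!i = rk (set p) (p!i)" using rk_perm[OF sp] i lp by simp
    also have "\<dots> = card {j. j<length p \<and> p!j < p!i} + 1" using rk_nth[OF dp] i lp by simp
    also have "{j. j<length p \<and> p!j < p!i} = {j. j<length u \<and> u!j < u!i}" using p i lp by auto
    also have "card \<dots> + 1 = rk (set u) (u!i)" using rk_nth[OF assms i] by simp
    finally show "p ! i = map (rk (set u)) u ! i" using i by simp
  qed
qed

lemma std_rotate: "distinct u \<Longrightarrow> std (rotate k u) = rotate k (std u)"
  by (simp add: std_eq rotate_map)

lemma std_sorted: assumes "sorted_wrt (<) s" shows "std s = [1..<length s + 1]"
proof -
  have d: "distinct s" using assms strict_sorted_iff by blast
  have fin: "finite (set s)" by simp
  have "sorted_wrt (<) (map (rk (set s)) s)"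
    unfolding sorted_wrt_map
    by (rule sorted_wrt_mono_rel[OF _ assms]) (use rk_less[OF fin] in auto)
  then have "sorted (map (rk (set s)) s)" "distinct (map (rk (set s)) s)"
    using strict_sorted_iff by blast+
  moreover have "set (map (rk (set s)) s) = set [1..<length s + 1]"
    using rk_image[OF fin] distinct_card[OF d] by auto
  ultimately show ?thesis using std_eq[OF d]
    by (metis sorted_distinct_set_unique sorted_upt distinct_upt)
qed

lemma std_inj: assumes "distinct u" "distinct v" "set u = set v" "std u = std v" shows "u = v"
proof -
  have "map (rk (set u)) u = map (rk (set u)) v" using assms std_eq by metis
  then show ?thesis by (rule map_inj_on) (use rk_inj assms(3) in auto)
qed


definition E :: "nat \<Rightarrow> nat \<Rightarrow> (nat list \<times> nat list) set" where
  "E c n = (Kstep c (Kcyc c) n \<union> (Kstep c (Kcyc c) n)\<inverse>)\<^sup>*"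

definition Sl :: "nat \<Rightarrow> nat \<Rightarrow> nat list" where "Sl c m = [1..<m] @ [Suc m..<c+2]"

definition Nset :: "nat \<Rightarrow> nat list set" where
  "Nset c = {w. \<exists>x v y. w = x@v@y \<and> length v = c \<and> std v \<in> cyc_shifts c}"

lemma E_trans: "(x,y) \<in> E c n \<Longrightarrow> (y,z) \<in> E c n \<Longrightarrow> (x,z) \<in> E c n"
  unfolding E_def by (rule rtrancl_trans)

lemma E_sym: "(x,y) \<in> E c n \<Longrightarrow> (y,x) \<in> E c n"
  unfolding E_def by (metis sym_Un_converse sym_rtrancl symD)

lemma perms_rot: "a@s@b \<in> perms n \<Longrightarrow> a@rotate i s@b \<in> perms n"
  by (auto simp: perms_def)

lemma std_rot_cyc: assumes "sorted_wrt (<) s" "length s = c" "c > 0"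
  shows "std (rotate i s) \<in> cyc_shifts c"
proof -
  have d: "distinct s" using assms strict_sorted_iff by blast
  have "std (rotate i s) = rotate i [1..<c+1]" using std_rotate[OF d] std_sorted[OF assms(1)] assms by simp
  also have "\<dots> = rotate (i mod c) [1..<c+1]" by (metis rotate_conv_mod length_upt diff_add_inverse2)
  finally show ?thesis using assms(3) unfolding cyc_shifts_def by auto
qed

lemma move: assumes "c > 0" "a@rotate i s@b \<in> perms n" "sorted_wrt (<) s" "length s = c"
  shows "(a@rotate i s@b, a@rotate j s@b) \<in> E c n"
proof -
  have p2: "a @ rotate j s @ b \<in> perms n" using assms(2) by (auto simp: perms_def)
  have q: "\<exists>P\<in>Kcyc c. std (rotate i s) \<in> P \<and> std (rotate j s) \<in> P"
      using std_rot_cyc[OF assms(3,4,1)] unfolding Kcyc_def by blast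
  have "(a@rotate i s@b, a@rotate j s@b) \<in> Kstep c (Kcyc c) n"
    unfolding Kstep_def
    apply (rule CollectI)
    apply (rule exI[of _ a], rule exI[of _ "rotate i s"], rule exI[of _ "rotate j s"], rule exI[of _ b])
    using assms p2 q by auto
  then show ?thesis unfolding E_def by blast
qed

lemma move0: assumes "c > 0" "a@rotate i s@b \<in> perms n" "sorted_wrt (<) s" "length s = c"
  shows "(a@rotate i s@b, a@s@b) \<in> E c n"
  using move[OF assms, of 0] by simp

lemma Sl_sorted: "sorted_wrt (<) (Sl c m)"
  by (auto simp: Sl_def sorted_wrt_append)

lemma Sl_len: "1 \<le> m \<Longrightarrow> m \<le> c+1 \<Longrightarrow> length (Sl c m) = c"
  by (simp add: Sl_def del: upt_Suc)

lemma Sl_set: "m \<le> c+1 \<Longrightarrow> set (Sl c m) = {1..c+1} - {m}"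
  by (auto simp: Sl_def)

lemma a_perm: "1 \<le> m \<Longrightarrow> m \<le> c+1 \<Longrightarrow> Sl c m @ [m] \<in> perms (c+1)"
  using Sl_set[of m c] Sl_sorted[of c m] strict_sorted_iff by (auto simp: perms_def)

lemma b_perm: "1 \<le> m \<Longrightarrow> m \<le> c+1 \<Longrightarrow> [m] @ Sl c m \<in> perms (c+1)"
  using Sl_set[of m c] Sl_sorted[of c m] strict_sorted_iff by (auto simp: perms_def)

lemma a_rot: assumes "c>0" "1 \<le> m" "m \<le> c+1"
  shows "(rotate i (Sl c m) @ [m], Sl c m @ [m]) \<in> E c (c+1)"
  using move0[of c "[]" i "Sl c m" "[m]" "c+1"] assms a_perm[OF assms(2,3)] perms_rot[of "[]" "Sl c m" "[m]" "c+1" i]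
    Sl_sorted Sl_len by simp

lemma b_rot: assumes "c>0" "1 \<le> m" "m \<le> c+1"
  shows "([m] @ rotate i (Sl c m), [m] @ Sl c m) \<in> E c (c+1)"
  using move0[of c "[m]" i "Sl c m" "[]" "c+1"] assms b_perm[OF assms(2,3)] perms_rot[of "[m]" "Sl c m" "[]" "c+1" i]
    Sl_sorted Sl_len by simp

lemma W1: assumes "1 \<le> m" "m \<le> c"
  shows "rotate (m-1) (Sl c m) @ [m] = [Suc m] @ rotate m (Sl c (Suc m))"
proof -
  have "rotate (m-1) (Sl c m) = [Suc m..<c+2] @ [1..<m]"
    using rotate_append[of "[1..<m]" "[Suc m..<c+2]"] by (simp add: Sl_def del: upt_Suc)
  moreover have "rotate m (Sl c (Suc m)) = [Suc (Suc m)..<c+2] @ [1..<Suc m]"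
    using rotate_append[of "[1..<Suc m]" "[Suc (Suc m)..<c+2]"] by (simp add: Sl_def del: upt_Suc)
  moreover have "[Suc m..<c+2] = Suc m # [Suc (Suc m)..<c+2]" using assms by (simp add: upt_conv_Cons)
  moreover have "[1..<Suc m] = [1..<m] @ [m]" using assms by simp
  ultimately show ?thesis by (simp del: upt_Suc)
qed

lemma W2: assumes "m + 2 \<le> c + 1"
  shows "rotate m (Sl c (m+2)) @ [m+2] = [Suc m] @ rotate (Suc m) (Sl c (Suc m))"
proof -
  have e1: "Sl c (m+2) = [1..<Suc m] @ ([Suc m] @ [m+3..<c+2])"
    by (simp add: Sl_def upt_Suc_append eval_nat_numeral numeral_2_eq_2 numeral_3_eq_3 del: upt_Suc)
  have e2: "Sl c (Suc m) = ([1..<Suc m] @ [m+2]) @ [m+3..<c+2]" using assms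
    by (simp add: Sl_def upt_conv_Cons numeral_2_eq_2 numeral_3_eq_3 del: upt_Suc)
  show ?thesis
    using rotate_append[of "[1..<Suc m]" "[Suc m] @ [m+3..<c+2]"]
      rotate_append[of "[1..<Suc m] @ [m+2]" "[m+3..<c+2]"]
    unfolding e1 e2 by (simp del: upt_Suc)
qed

lemma W3: assumes "c \<ge> 1"
  shows "rotate (c-1) (Sl c 1) @ [1] = [c+1] @ rotate 1 (Sl c (c+1))"
proof -
  have e1: "Sl c 1 = [2..<c+1] @ [c+1]" using assms
    by (simp add: Sl_def upt_Suc_append eval_nat_numeral numeral_2_eq_2 numeral_3_eq_3 del: upt_Suc)
  have e2: "Sl c (c+1) = [1] @ [2..<c+1]" using assms by (simp add: Sl_def upt_conv_Cons numeral_2_eq_2 numeral_3_eq_3 del: upt_Suc)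
  show ?thesis
    using rotate_append[of "[2..<c+1]" "[c+1]"] rotate_append[of "[1]" "[2..<c+1]"]
    unfolding e1 e2 by (simp del: upt_Suc)
qed


lemma ab: assumes "1 \<le> m" "m \<le> c"
  shows "(Sl c m @ [m], [Suc m] @ Sl c (Suc m)) \<in> E c (c+1)"
proof -
  have c: "c > 0" using assms by simp
  have F1: "(Sl c m @ [m], rotate (m-1) (Sl c m) @ [m]) \<in> E c (c+1)"
    using E_sym[OF a_rot[of c m "m-1"]] assms c by simp
  have F2: "([Suc m] @ rotate m (Sl c (Suc m)), [Suc m] @ Sl c (Suc m)) \<in> E c (c+1)"
    using b_rot[of c "Suc m" m] assms c by simp
  show ?thesis using E_trans[OF F1[unfolded W1[OF assms]] F2] .
qed

lemma ba: assumes "m + 2 \<le> c+1"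
  shows "([Suc m] @ Sl c (Suc m), Sl c (m+2) @ [m+2]) \<in> E c (c+1)"
proof -
  have c: "c > 0" using assms by simp
  have F1: "(Sl c (m+2) @ [m+2], rotate m (Sl c (m+2)) @ [m+2]) \<in> E c (c+1)"
    using E_sym[OF a_rot[of c "m+2" m]] assms c by simp
  have F2: "([Suc m] @ rotate (Suc m) (Sl c (Suc m)), [Suc m] @ Sl c (Suc m)) \<in> E c (c+1)"
    using b_rot[of c "Suc m" "Suc m"] assms c by simp
  show ?thesis using E_sym[OF E_trans[OF F1[unfolded W2[OF assms]] F2]] .
qed

lemma aa: assumes "1 \<le> m" "m + 2 \<le> c+1"
  shows "(Sl c m @ [m], Sl c (m+2) @ [m+2]) \<in> E c (c+1)"
proof -
  have "m \<le> c" using assms by simp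
  then have "(Sl c m @ [m], [Suc m] @ Sl c (Suc m)) \<in> E c (c+1)" using ab[of m c] assms by blast
  then show ?thesis using E_trans ba[OF assms(2)] by blast
qed

lemma a1c: assumes "c \<ge> 1"
  shows "(Sl c 1 @ [1], Sl c c @ [c]) \<in> E c (c+1)"
proof -
  have c: "c > 0" using assms by simp
  have F1: "(Sl c 1 @ [1], rotate (c-1) (Sl c 1) @ [1]) \<in> E c (c+1)"
    using E_sym[OF a_rot[of c 1 "c-1"]] c by simp
  have F2: "([c+1] @ rotate 1 (Sl c (c+1)), [c+1] @ Sl c (c+1)) \<in> E c (c+1)"
    using b_rot[of c "c+1" 1] c by simp
  have F3: "(Sl c c @ [c], [c+1] @ Sl c (c+1)) \<in> E c (c+1)" using ab[of c c] assms by simp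
  show ?thesis using E_trans[OF E_trans[OF F1[unfolded W3[OF assms]] F2] E_sym[OF F3]] .
qed

lemma aa_iter: "1 \<le> m \<Longrightarrow> m + 2*d \<le> c+1 \<Longrightarrow> (Sl c m @ [m], Sl c (m+2*d) @ [m+2*d]) \<in> E c (c+1)"
proof (induction d)
  case 0 then show ?case by (simp add: E_def)
next
  case (Suc d)
  then have "(Sl c m @ [m], Sl c (m+2*d) @ [m+2*d]) \<in> E c (c+1)" by simp
  moreover have "(Sl c (m+2*d) @ [m+2*d], Sl c (m+2*d+2) @ [m+2*d+2]) \<in> E c (c+1)"
    using aa[of "m+2*d" c] Suc by simp
  ultimately have "(Sl c m @ [m], Sl c (m+2*d+2) @ [m+2*d+2]) \<in> E c (c+1)" by (rule E_trans)
  moreover have "m + 2 * Suc d = m+2*d+2" by simp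
  ultimately show ?case by simp
qed

lemma a_all: assumes "even c" "c > 1" "1 \<le> m" "m \<le> c+1"
  shows "(Sl c m @ [m], Sl c (c+1) @ [c+1]) \<in> E c (c+1)"
proof (cases "odd m")
  case True
  have "even (c+1-m)" using assms True by simp
  then obtain d where "c+1-m = 2*d" using evenE by blast
  then have "c + 1 = m + 2*d" using assms by arith
  then show ?thesis using aa_iter[OF assms(3), of d c] by simp
next
  case False
  have "m \<noteq> c+1" using assms False by auto
  then have mc: "m \<le> c" using assms by simp
  have "even (c-m)" using assms False mc by simp
  then obtain d where "c-m = 2*d" using evenE by blast
  then have d: "c = m + 2*d" using mc by arith
  obtain d' where "c = 2*d'" using assms by (auto elim: evenE)
  then have d': "c + 1 = 1 + 2*d'" by simp
  have "(Sl c m @ [m], Sl c c @ [c]) \<in> E c (c+1)" using aa_iter[OF assms(3), of d c] d by simp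
  moreover have "(Sl c c @ [c], Sl c 1 @ [1]) \<in> E c (c+1)" using E_sym[OF a1c[of c]] assms by simp
  moreover have "(Sl c 1 @ [1], Sl c (c+1) @ [c+1]) \<in> E c (c+1)" using aa_iter[of 1 d' c] d' by simp
  ultimately show ?thesis using E_trans by blast
qed

lemma b_all: assumes "even c" "c > 1" "1 \<le> m" "m \<le> c+1"
  shows "([m] @ Sl c m, Sl c (c+1) @ [c+1]) \<in> E c (c+1)"
proof (cases "m = 1")
  case True
  have h: "[1..<(c::nat)+2] = 1 # [Suc 1..<c+2]" by (rule upt_conv_Cons) simp
  have e1: "[1] @ Sl c 1 = [1..<c+2]" unfolding Sl_def
    using h by (simp only: append.simps upt_0 upt.simps(1)) simp
  have e2: "Sl c (c+1) = [1..<c+1]" by (simp add: Sl_def del: upt_Suc)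
  have e4: "[1..<c+1]@[c+1] = [1..<c+2]" by simp
  have "[1] @ Sl c 1 = Sl c (c+1) @ [c+1]" by (simp only: e1 e2 e4)
  then show ?thesis using True by (simp add: E_def)
next
  case False
  then obtain k where k: "m = Suc k" "1 \<le> k" "k \<le> c" using assms by (cases m) auto
  have "([m] @ Sl c m, Sl c k @ [k]) \<in> E c (c+1)" using E_sym[OF ab[OF k(2,3)]] k(1) by simp
  moreover have "(Sl c k @ [k], Sl c (c+1) @ [c+1]) \<in> E c (c+1)" using a_all[OF assms(1,2) k(2)] k by simp
  ultimately show ?thesis by (rule E_trans)
qed


lemma cyc_conv: assumes "distinct v" "sorted_wrt (<) s" "set s = set v" "std v \<in> cyc_shifts (length v)"
  shows "\<exists>k. v = rotate k s"
proof -
  obtain k where k: "std v = rotate k [1..<length v+1]" using assms(4) unfolding cyc_shifts_def by blast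
  have ds: "distinct s" using assms(2) strict_sorted_iff by blast
  have ls: "length s = length v" using distinct_card[OF ds] distinct_card[OF assms(1)] assms(3) by simp
  have "std (rotate k s) = rotate k [1..<length v+1]" using std_rotate[OF ds] std_sorted[OF assms(2)] ls by simp
  then have "v = rotate k s" using std_inj[OF assms(1), of "rotate k s"] ds assms(3) k by simp
  then show ?thesis by blast
qed

lemma perms_split: "x@u@y \<in> perms n \<Longrightarrow> x@v@y \<in> perms n \<Longrightarrow> set u = set v \<and> distinct u \<and> distinct v"
  unfolding perms_def by (auto simp: set_eq_iff)

lemma step_triv: assumes "(w1, w2) \<in> Kstep c (Kcyc c) n" "w1 \<notin> Nset c \<or> w2 \<notin> Nset c"
  shows "w1 = w2"
proof -
  obtain x u v y where w: "w1 = x@u@y" "w2 = x@v@y" "x@u@y \<in> perms n" "x@v@y \<in> perms n"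
    "length u = c" "length v = c" and P: "\<exists>P\<in>Kcyc c. std u \<in> P \<and> std v \<in> P"
    using assms(1) unfolding Kstep_def by blast
  then obtain P where P: "P \<in> Kcyc c" "std u \<in> P" "std v \<in> P" by blast
  show ?thesis
  proof (cases "P = cyc_shifts c")
    case True
    then have "w1 \<in> Nset c" "w2 \<in> Nset c" using w P unfolding Nset_def by blast+
    then show ?thesis using assms(2) by blast
  next
    case False
    then obtain p where "P = {p}" using P(1) unfolding Kcyc_def by blast
    then have "std u = std v" using P by simp
    then have "u = v" using perms_split[OF w(3,4)] std_inj by blast
    then show ?thesis using w by simp
  qed
qed

lemma E_iso: assumes "(w, w') \<in> E c n" "w \<notin> Nset c" shows "w' = w"
  using assms(1) unfolding E_def
proof (induction rule: rtrancl_induct)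
  case (step y z)
  then have "y \<notin> Nset c" using assms(2) by simp
  then show ?case using step step_triv[of y z c n] step_triv[of z y c n] by auto
qed simp

lemma N_conn: assumes "even c" "c > 1" "w \<in> perms (c+1)" "w \<in> Nset c"
  shows "(w, Sl c (c+1) @ [c+1]) \<in> E c (c+1)"
proof -
  obtain x v y where w: "w = x@v@y" "length v = c" "std v \<in> cyc_shifts c"
    using assms(4) unfolding Nset_def by blast
  have dw: "distinct w" and sw: "set w = {1..c+1}" using assms(3) unfolding perms_def by auto
  have "length w = c+1" using distinct_card[OF dw] sw by simp
  then have lxy: "length x + length y = 1" using w by simp
  have c0: "c > 0" using assms by simp
  show ?thesis
  proof (cases x)
    case Nil
    then obtain z where y: "y = [z]" using lxy by (cases y) auto
    have w': "w = v @ [z]" using w Nil y by simp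
    have z: "1 \<le> z" "z \<le> c+1" using sw w' by auto
    have sv: "set v = set (Sl c z)" using Sl_set[OF z(2)] sw dw w' by auto
    obtain k where "v = rotate k (Sl c z)"
      using cyc_conv[of v "Sl c z"] dw w' Sl_sorted sv w(2,3) by auto
    then have "(w, Sl c z @ [z]) \<in> E c (c+1)" using a_rot[OF c0 z] w' by simp
    then show ?thesis using a_all[OF assms(1,2) z] E_trans by blast
  next
    case (Cons z x')
    then have x: "x = [z]" "y = []" using lxy by auto
    have w': "w = [z] @ v" using w x by simp
    have z: "1 \<le> z" "z \<le> c+1" using sw w' by auto
    have sv: "set v = set (Sl c z)" using Sl_set[OF z(2)] sw dw w' by auto
    obtain k where "v = rotate k (Sl c z)"
      using cyc_conv[of v "Sl c z"] dw w' Sl_sorted sv w(2,3) by auto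
    then have "(w, [z] @ Sl c z) \<in> E c (c+1)" using b_rot[OF c0 z] w' by simp
    then show ?thesis using b_all[OF assms(1,2) z] E_trans by blast
  qed
qed


lemma finite_perms: "finite (perms n)"
proof -
  have "perms n \<subseteq> {xs. set xs \<subseteq> {1..n} \<and> length xs = n}"
    unfolding perms_def using distinct_card by fastforce
  moreover have "finite {xs. set xs \<subseteq> {1..n} \<and> length xs = n}"
    by (rule finite_lists_length_eq) simp
  ultimately show ?thesis by (rule finite_subset)
qed

theorem corollary2p6:
  fixes c :: nat
  assumes "even c" and "c > 1"
  shows "card {C \<in> perms (c + 1) // Kequiv c (Kcyc c) (c + 1). card C > 1} = 1"
proof -
  define R where "R = Kequiv c (Kcyc c) (c + 1)"
  define I where "I = Sl c (c+1) @ [c+1]"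
  have c0: "c > 0" using assms by simp
  have R: "R = E c (c+1) \<inter> (perms (c+1) \<times> perms (c+1))"
    unfolding R_def Kequiv_def E_def by simp
  have Ip: "I \<in> perms (c+1)" unfolding I_def by (rule a_perm) auto
  have lS: "length (Sl c (c+1)) = c" by (rule Sl_len) auto
  have "std (Sl c (c+1)) = rotate 0 [1..<c+1]" using std_sorted[OF Sl_sorted] lS by simp
  then have "std (Sl c (c+1)) \<in> cyc_shifts c" using c0 unfolding cyc_shifts_def by blast
  then have IN: "I \<in> Nset c" unfolding Nset_def I_def using lS
    by (intro CollectI exI[of _ "[]"] exI[of _ "Sl c (c+1)"] exI[of _ "[c+1]"]) simp
  have cls: "R``{w} = R``{I}" if "w \<in> perms (c+1)" "w \<in> Nset c" for w
  proof -
    have "(w, I) \<in> E c (c+1)" unfolding I_def by (rule N_conn) (use assms that in auto)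
    then show ?thesis unfolding R using E_trans E_sym that Ip by blast
  qed
  have sing: "R``{w} = {w}" if "w \<in> perms (c+1)" "w \<notin> Nset c" for w
    unfolding R using E_iso[of w _ c "c+1"] that by (auto simp: E_def)
  define I2 where "I2 = rotate 1 (Sl c (c+1)) @ [c+1]"
  have "(I2, I) \<in> E c (c+1)" unfolding I2_def I_def by (rule a_rot) (use c0 in auto)
  moreover have I2p: "I2 \<in> perms (c+1)" unfolding I2_def using perms_rot[of "[]" "Sl c (c+1)" "[c+1]" "c+1" 1] Ip I_def by simp
  ultimately have I2R: "I2 \<in> R``{I}" unfolding R using E_sym Ip by blast
  have IR: "I \<in> R``{I}" unfolding R using Ip by (simp add: E_def)
  have SE: "Sl c (c+1) = [1..<c+1]" by (simp add: Sl_def del: upt_Suc)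
  have "I2 \<noteq> I"
  proof
    assume "I2 = I"
    then have "rotate 1 [1..<c+1] = [1..<c+1]" unfolding I2_def I_def SE by simp
    then have "rotate 1 [1..<c+1] ! 0 = [1..<c+1] ! 0" by simp
    moreover have "rotate 1 [1..<c+1] ! 0 = [1..<c+1] ! 1" using assms nth_rotate[of 0 "[1..<c+1]" 1] by (simp del: upt_Suc)
    moreover have "[1..<c+1]!0 = 1" "[1..<c+1]!1 = 2" using assms by (simp_all del: upt_Suc)
    ultimately show False by simp
  qed
  have fin: "finite (R``{I})" using finite_perms[of "c+1"] unfolding R by (rule finite_subset[rotated]) blast
  have "card {I, I2} \<le> card (R``{I})" using IR I2R fin by (intro card_mono) auto
  then have big: "card (R``{I}) > 1" using \<open>I2 \<noteq> I\<close> by simp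
  have "{C \<in> perms (c + 1) // R. card C > 1} = {R``{I}}"
  proof (intro equalityI subsetI)
    fix C assume "C \<in> {C \<in> perms (c + 1) // R. card C > 1}"
    then have C: "C \<in> perms (c+1) // R" "card C > 1" by auto
    then obtain w where w: "w \<in> perms (c+1)" "C = R``{w}" by (auto elim: quotientE)
    show "C \<in> {R``{I}}"
    proof (cases "w \<in> Nset c")
      case True then show ?thesis using cls w by simp
    next
      case False then show ?thesis using sing[OF w(1)] w C(2) by simp
    qed
  next
    fix C assume "C \<in> {R``{I}}"
    then show "C \<in> {C \<in> perms (c + 1) // R. card C > 1}" using big Ip by (auto intro: quotientI)
  qed
  then show ?thesis unfolding R_def by simp
qed

end
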